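(* Let $(H,\prec,\cdot,\succ,\Delta)$ be a $q$-tridendriform bialgebra and let $M_{1n}$ be the brace operations associated to the dendriform algebra $(H,\prec,q\,\cdot+\succ)$. If $x,y,z_1,\dots,z_n\in H$ are primitive, then $M_{1n}(x;z_1,\dots,z_n)$ and $x\cdot y$ are primitive. Consequently the subspace $\mathrm{Prim}(H)$ of primitive elements is a sub-$GV_q$-algebra of $(H,M_{1n},\cdot)$.
   Context: $q$-tridendriform algebra: a vector space $H$ with bilinear $\prec,\cdot,\succ$ satisfying (1) $(a\prec b)\prec c=a\prec(b\prec c+b\succ c+q\,b\cdot c)$; (2) $(a\succ b)\prec c=a\succ(b\prec c)$; (3) $(a\prec b+a\succ b+q\,a\cdot b)\succ c=a\succ(b\succ c)$; (4) $(a\cdot b)\cdot c=a\cdot(b\cdot c)$; (5) $(a\succ b)\cdot c=a\succ(b\cdot c)$; (6) $(a\prec b)\cdot c=a\cdot(b\succ c)$; (7) $(a\cdot b)\prec c=a\cdot(b\prec c)$. Put $*:=\prec+q\,\cdot+\succ$. Unit conventions: $H_+:=H\oplus\mathbb{K}1$, $\epsilon:H_+\to\mathbb{K}$ the projection onto $\mathbb{K}$; for $x\in H$: $x\succ1=x\cdot1=1\cdot x=1\prec x=0$, $1\succ x=x=x\prec1$, $1*x=x*1=x$; moreover in tensor expressions one sets $(x*y)\otimes(1\succ1):=(x\succ y)\otimes1$, $(x*y)\otimes(1\cdot1):=(x\cdot y)\otimes1$, $(x*y)\otimes(1\prec1):=(x\prec y)\otimes1$. A $q$-tridendriform bialgebra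 is a $q$-tridendriform algebra $H$ with a linear map $\Delta:H_+\to H_+\otimes H_+$ such that $\Delta(1)=1\otimes1$, $(\epsilon\otimes\mathrm{Id})\Delta(x)=1\otimes x$, $(\mathrm{Id}\otimes\epsilon)\Delta(x)=x\otimes1$, and $\Delta(x\circ y)=\sum(x_{(1)}*y_{(1)})\otimes(x_{(2)}\circ y_{(2)})$ for $\circ\in\{\succ,\cdot,\prec\}$ and $x,y\in H$, where $\Delta(x)=\sum x_{(1)}\otimes x_{(2)}$ in $H_+\otimes H_+$. An element $x\in H$ is primitive if $\Delta(x)=x\otimes1+1\otimes x$. Brace operations of the dendriform algebra $(H,\prec,\tilde\succ)$, $\tilde\succ=q\,\cdot+\succ$: $\omega_\prec(y_1,\dots,y_i)=y_1\prec(y_2\prec(\cdots\prec y_i))$, $\omega_{\tilde\succ}(y_{i+1},\dots,y_n)=((y_{i+1}\tilde\succ y_{i+2})\tilde\succ\cdots)\tilde\succ y_n$, empty $\omega=1$; $M_{10}=\mathrm{Id}$ and $M_{1n}(x;y_1,\dots,y_n)=\sum_{i=0}^n(-1)^{n-i}(\omega_\prec(y_1,\dots,y_i)\tilde\succ x)\prec\omega_{\tilde\succ}(y_{i+1},\dots,y_n)$. A $GV_q$ algebra is a brace algebra $(B,M_{1n})$ with an associative product $\cdot$ satisfying $M_{1n}(x\cdot y;z_1,\dots,z_n)=\sum_{0\le i\le j\le n}q^{j-i}M_{1i}(x;z_1,\dots,z_i)\cdot z_{i+1}\cdots z_j\cdot M_{1(n-j)}(y;z_{j+1},\dots,z_n)$;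 $(H,M_{1n},\cdot)$ is a $GV_q$ algebra. *)

theory Defs
  imports Complex_Main "HOL-Library.Product_Plus"
begin

text \<open>H is a vector space over the field 'k with scalar multiplication sc.
  The augmented space H_+ = H \<oplus> K1 is modelled as pairs (x, c) meaning x + c 1.\<close>

type_synonym ('h,'k) aug = "'h \<times> 'k"

definition scaleA :: "('k::field \<Rightarrow> 'h::ab_group_add \<Rightarrow> 'h) \<Rightarrow> 'k \<Rightarrow> ('h,'k) aug \<Rightarrow> ('h,'k) aug" where
  "scaleA sc c a = (sc c (fst a), c * snd a)"

definition eps :: "('h,'k) aug \<Rightarrow> 'k" where
  "eps a = snd a"

definition unitA :: "('h::zero,'k::one) aug" where
  "unitA = (0, 1)"

definition incl :: "'h \<Rightarrow> ('h,'k::zero) aug" where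
  "incl x = (x, 0)"

definition bilinear_op :: "('k::field \<Rightarrow> 'h::ab_group_add \<Rightarrow> 'h) \<Rightarrow> ('h \<Rightarrow> 'h \<Rightarrow> 'h) \<Rightarrow> bool" where
  "bilinear_op sc f \<longleftrightarrow>
     (\<forall>x y z. f (x + y) z = f x z + f y z) \<and>
     (\<forall>x y z. f x (y + z) = f x y + f x z) \<and>
     (\<forall>c x y. f (sc c x) y = sc c (f x y)) \<and>
     (\<forall>c x y. f x (sc c y) = sc c (f x y))"

text \<open>An element of H_+ \<otimes> H_+ is represented by a finite list of pure tensors
  (a list [(a1,b1),...] stands for the sum of the ai \<otimes> bi).  Two representations
  denote the same tensor iff every bilinear form H_+ \<times> H_+ \<rightarrow> K takes the same
  value on them (over a field, bilinear forms separate points of V \<otimes> W).\<close>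

type_synonym ('h,'k) tens = "(('h,'k) aug \<times> ('h,'k) aug) list"

definition bilinear_form :: "('k::field \<Rightarrow> 'h::ab_group_add \<Rightarrow> 'h) \<Rightarrow> (('h,'k) aug \<Rightarrow> ('h,'k) aug \<Rightarrow> 'k) \<Rightarrow> bool" where
  "bilinear_form sc \<phi> \<longleftrightarrow>
     (\<forall>a a' b. \<phi> (a + a') b = \<phi> a b + \<phi> a' b) \<and>
     (\<forall>a b b'. \<phi> a (b + b') = \<phi> a b + \<phi> a b') \<and>
     (\<forall>c a b. \<phi> (scaleA sc c a) b = c * \<phi> a b) \<and>
     (\<forall>c a b. \<phi> a (scaleA sc c b) = c * \<phi> a b)"

definition teq :: "('k::field \<Rightarrow> 'h::ab_group_add \<Rightarrow> 'h) \<Rightarrow> ('h,'k) tens \<Rightarrow> ('h,'k) tens \<Rightarrow> bool" where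
  "teq sc t u \<longleftrightarrow>
     (\<forall>\<phi>. bilinear_form sc \<phi> \<longrightarrow>
        sum_list (map (\<lambda>(a,b). \<phi> a b) t) = sum_list (map (\<lambda>(a,b). \<phi> a b) u))"

definition tscale :: "('k::field \<Rightarrow> 'h::ab_group_add \<Rightarrow> 'h) \<Rightarrow> 'k \<Rightarrow> ('h,'k) tens \<Rightarrow> ('h,'k) tens" where
  "tscale sc c t = map (\<lambda>(a,b). (scaleA sc c a, b)) t"

definition starA :: "('k::field \<Rightarrow> 'h::ab_group_add \<Rightarrow> 'h) \<Rightarrow> ('h \<Rightarrow> 'h \<Rightarrow> 'h) \<Rightarrow> ('h \<Rightarrow> 'h \<Rightarrow> 'h)
    \<Rightarrow> ('h \<Rightarrow> 'h \<Rightarrow> 'h) \<Rightarrow> 'k \<Rightarrow> ('h,'k) aug \<Rightarrow> ('h,'k) aug \<Rightarrow> ('h,'k) aug" where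
  "starA sc prec dot succ q a c =
     (prec (fst a) (fst c) + sc q (dot (fst a) (fst c)) + succ (fst a) (fst c)
        + sc (snd c) (fst a) + sc (snd a) (fst c),
      snd a * snd c)"

text \<open>The three operations extended (bilinearly) to H_+ \<times> H_+ with values in H,
  using x \<succ> 1 = 0, 1 \<succ> x = x;  x \<cdot> 1 = 1 \<cdot> x = 0;  x \<prec> 1 = x, 1 \<prec> x = 0.
  The undefined value 1 \<circ> 1 is treated separately (see tprod).\<close>
definition ext_succ :: "('k::field \<Rightarrow> 'h::ab_group_add \<Rightarrow> 'h) \<Rightarrow> ('h \<Rightarrow> 'h \<Rightarrow> 'h) \<Rightarrow> ('h,'k) aug \<Rightarrow> ('h,'k) aug \<Rightarrow> 'h" where
  "ext_succ sc succ a b = succ (fst a) (fst b) + sc (snd a) (fst b)"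

definition ext_dot :: "('h \<Rightarrow> 'h \<Rightarrow> 'h) \<Rightarrow> ('h,'k) aug \<Rightarrow> ('h,'k) aug \<Rightarrow> 'h" where
  "ext_dot dot a b = dot (fst a) (fst b)"

definition ext_prec :: "('k::field \<Rightarrow> 'h::ab_group_add \<Rightarrow> 'h) \<Rightarrow> ('h \<Rightarrow> 'h \<Rightarrow> 'h) \<Rightarrow> ('h,'k) aug \<Rightarrow> ('h,'k) aug \<Rightarrow> 'h" where
  "ext_prec sc prec a b = prec (fst a) (fst b) + sc (snd b) (fst a)"

text \<open>Product on H_+ \<otimes> H_+ for an operation \<circ> (given by its extension E):
  (a \<otimes> b)(c \<otimes> d) = (a * c) \<otimes> (b \<circ> d), where the component involving 1 \<circ> 1
  is replaced, by the convention (x*y) \<otimes> (1\<circ>1) := (x\<circ>y) \<otimes> 1, by (a \<circ> c) \<otimes> 1.\<close>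
definition tprod :: "('k::field \<Rightarrow> 'h::ab_group_add \<Rightarrow> 'h) \<Rightarrow> (('h,'k) aug \<Rightarrow> ('h,'k) aug \<Rightarrow> ('h,'k) aug)
    \<Rightarrow> (('h,'k) aug \<Rightarrow> ('h,'k) aug \<Rightarrow> 'h) \<Rightarrow> ('h,'k) tens \<Rightarrow> ('h,'k) tens \<Rightarrow> ('h,'k) tens" where
  "tprod sc star E t u =
     concat (map (\<lambda>(a,b). concat (map (\<lambda>(c,d).
        [(star a c, incl (E b d)),
         (scaleA sc (snd b * snd d) (incl (E a c)), unitA)]) u)) t)"

definition q_tridendriform ::
  "('k::field \<Rightarrow> 'h::ab_group_add \<Rightarrow> 'h) \<Rightarrow> 'k \<Rightarrow> ('h \<Rightarrow> 'h \<Rightarrow> 'h) \<Rightarrow> ('h \<Rightarrow> 'h \<Rightarrow> 'h) \<Rightarrow> ('h \<Rightarrow> 'h \<Rightarrow> 'h) \<Rightarrow> bool" where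
  "q_tridendriform sc q prec dot succ \<longleftrightarrow>
     vector_space sc \<and> bilinear_op sc prec \<and> bilinear_op sc dot \<and> bilinear_op sc succ \<and>
     (\<forall>a b c. prec (prec a b) c = prec a (prec b c + succ b c + sc q (dot b c))) \<and>
     (\<forall>a b c. prec (succ a b) c = succ a (prec b c)) \<and>
     (\<forall>a b c. succ (prec a b + succ a b + sc q (dot a b)) c = succ a (succ b c)) \<and>
     (\<forall>a b c. dot (dot a b) c = dot a (dot b c)) \<and>
     (\<forall>a b c. dot (succ a b) c = succ a (dot b c)) \<and>
     (\<forall>a b c. dot (prec a b) c = dot a (succ b c)) \<and>
     (\<forall>a b c. prec (dot a b) c = dot a (prec b c))"

text \<open>Delta is given on H (Delta(1) = 1 \<otimes> 1 is forced); it is linear (up to tensor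
  equality), counital, and compatible with the three products.\<close>
definition q_tridendriform_bialgebra ::
  "('k::field \<Rightarrow> 'h::ab_group_add \<Rightarrow> 'h) \<Rightarrow> 'k \<Rightarrow> ('h \<Rightarrow> 'h \<Rightarrow> 'h) \<Rightarrow> ('h \<Rightarrow> 'h \<Rightarrow> 'h) \<Rightarrow> ('h \<Rightarrow> 'h \<Rightarrow> 'h)
     \<Rightarrow> ('h \<Rightarrow> ('h,'k) tens) \<Rightarrow> bool" where
  "q_tridendriform_bialgebra sc q prec dot succ \<Delta> \<longleftrightarrow>
     q_tridendriform sc q prec dot succ \<and>
     (\<forall>x y. teq sc (\<Delta> (x + y)) (\<Delta> x @ \<Delta> y)) \<and>
     (\<forall>c x. teq sc (\<Delta> (sc c x)) (tscale sc c (\<Delta> x))) \<and>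
     (\<forall>x. sum_list (map (\<lambda>(a,b). scaleA sc (eps a) b) (\<Delta> x)) = incl x) \<and>
     (\<forall>x. sum_list (map (\<lambda>(a,b). scaleA sc (eps b) a) (\<Delta> x)) = incl x) \<and>
     (\<forall>x y. teq sc (\<Delta> (succ x y))
              (tprod sc (starA sc prec dot succ q) (ext_succ sc succ) (\<Delta> x) (\<Delta> y))) \<and>
     (\<forall>x y. teq sc (\<Delta> (dot x y))
              (tprod sc (starA sc prec dot succ q) (ext_dot dot) (\<Delta> x) (\<Delta> y))) \<and>
     (\<forall>x y. teq sc (\<Delta> (prec x y))
              (tprod sc (starA sc prec dot succ q) (ext_prec sc prec) (\<Delta> x) (\<Delta> y)))"

definition primitive :: "('k::field \<Rightarrow> 'h::ab_group_add \<Rightarrow> 'h) \<Rightarrow> ('h \<Rightarrow> ('h,'k) tens) \<Rightarrow> 'h \<Rightarrow> bool" where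
  "primitive sc \<Delta> x \<longleftrightarrow> teq sc (\<Delta> x) [(incl x, unitA), (unitA, incl x)]"

definition tsucc :: "('k::field \<Rightarrow> 'h::ab_group_add \<Rightarrow> 'h) \<Rightarrow> 'k \<Rightarrow> ('h \<Rightarrow> 'h \<Rightarrow> 'h) \<Rightarrow> ('h \<Rightarrow> 'h \<Rightarrow> 'h) \<Rightarrow> 'h \<Rightarrow> 'h \<Rightarrow> 'h" where
  "tsucc sc q dot succ a b = sc q (dot a b) + succ a b"

fun omega_prec :: "('h \<Rightarrow> 'h \<Rightarrow> 'h) \<Rightarrow> 'h list \<Rightarrow> 'h" where
  "omega_prec prec [] = undefined"
| "omega_prec prec [y] = y"
| "omega_prec prec (y # ys) = prec y (omega_prec prec ys)"

definition omega_tsucc :: "('h \<Rightarrow> 'h \<Rightarrow> 'h) \<Rightarrow> 'h list \<Rightarrow> 'h" where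
  "omega_tsucc ts ys = foldl ts (hd ys) (tl ys)"

text \<open>M_{1n}(x; y_1..y_n) = sum_{i=0}^n (-1)^{n-i} (omega_prec(y_1..y_i) ~\<succ> x) \<prec> omega_tsucc(y_{i+1}..y_n),
  with empty omega = 1 and the unit rules 1 ~\<succ> x = x, z \<prec> 1 = z.\<close>
definition M1 :: "('k::field \<Rightarrow> 'h::ab_group_add \<Rightarrow> 'h) \<Rightarrow> 'k \<Rightarrow> ('h \<Rightarrow> 'h \<Rightarrow> 'h) \<Rightarrow> ('h \<Rightarrow> 'h \<Rightarrow> 'h)
    \<Rightarrow> ('h \<Rightarrow> 'h \<Rightarrow> 'h) \<Rightarrow> 'h \<Rightarrow> 'h list \<Rightarrow> 'h" where
  "M1 sc q prec dot succ x ys =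
     (\<Sum>i\<in>{0..length ys}.
        sc ((-1) ^ (length ys - i))
          (let L = (if i = 0 then x else tsucc sc q dot succ (omega_prec prec (take i ys)) x)
           in if i = length ys then L
              else prec L (omega_tsucc (tsucc sc q dot succ) (drop i ys))))"

end

theory Submission
  imports Defs
begin

definition Phi :: "(('h,'k) aug \<Rightarrow> ('h,'k) aug \<Rightarrow> 'k::comm_monoid_add) \<Rightarrow> ('h,'k) tens \<Rightarrow> 'k" where
  "Phi \<phi> t = sum_list (map (\<lambda>(a,b). \<phi> a b) t)"

lemma Phi_simps[simp]:
  "Phi \<phi> [] = 0"
  "Phi \<phi> ((a,b)#t) = \<phi> a b + Phi \<phi> t"
  "Phi \<phi> (t @ u) = Phi \<phi> t + Phi \<phi> u"
  by (simp_all add: Phi_def)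

lemma Phi_concat: "Phi \<phi> (concat ts) = sum_list (map (Phi \<phi>) ts)"
  by (induction ts) (auto simp: Phi_def)

lemma teq_Phi: "teq sc t u \<longleftrightarrow> (\<forall>\<phi>. bilinear_form sc \<phi> \<longrightarrow> Phi \<phi> t = Phi \<phi> u)"
  by (simp add: teq_def Phi_def)

lemma sum_list_map_add: "sum_list (map (\<lambda>p. f p + g p) xs) = sum_list (map f xs) + sum_list (map g xs)"
  for f g :: "'a \<Rightarrow> 'b::comm_monoid_add"
  by (induction xs) (auto simp: algebra_simps)

lemma sum_list_map_mult: "sum_list (map (\<lambda>p. c * f p) xs) = c * sum_list (map f xs)"
  for f :: "'a \<Rightarrow> 'b::semiring_0"
  by (induction xs) (auto simp: algebra_simps)

lemma sum_list_map_zero: "sum_list (map (\<lambda>p. 0::'b::comm_monoid_add) xs) = 0"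
  by (induction xs) auto

lemma sum_list_swap:
  "sum_list (map (\<lambda>p. sum_list (map (g p) u)) t) = sum_list (map (\<lambda>r. sum_list (map (\<lambda>p. g p r) t)) u)"
  for g :: "'a \<Rightarrow> 'c \<Rightarrow> 'b::comm_monoid_add"
  by (induction t) (auto simp: sum_list_map_add)

locale qtb =
  fixes sc :: "'k::field \<Rightarrow> 'h::ab_group_add \<Rightarrow> 'h"
    and q :: 'k
    and prec dot succ :: "'h \<Rightarrow> 'h \<Rightarrow> 'h"
    and \<Delta> :: "'h \<Rightarrow> ('h,'k) tens"
  assumes bialg: "q_tridendriform_bialgebra sc q prec dot succ \<Delta>"
begin

lemma tri: "q_tridendriform sc q prec dot succ"
  using bialg by (simp add: q_tridendriform_bialgebra_def)

lemma vs: "vector_space sc"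
  using tri by (simp add: q_tridendriform_def)

sublocale vs: vector_space sc by (rule vs)

lemma bop: "bilinear_op sc prec" "bilinear_op sc dot" "bilinear_op sc succ"
  using tri by (simp_all add: q_tridendriform_def)

lemma bop_laws:
  assumes "bilinear_op sc f"
  shows "f (x + y) z = f x z + f y z" "f x (y + z) = f x y + f x z"
    "f (sc c x) y = sc c (f x y)" "f x (sc c y) = sc c (f x y)"
    "f 0 y = 0" "f y 0 = 0" "f (- x) y = - f x y" "f y (- x) = - f y x"
    "f (x - y) z = f x z - f y z" "f z (x - y) = f z x - f z y"
proof -
  show A: "f (x + y) z = f x z + f y z" "f x (y + z) = f x y + f x z"
    "f (sc c x) y = sc c (f x y)" "f x (sc c y) = sc c (f x y)"
    using assms by (auto simp: bilinear_op_def)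
  have z1: "f 0 y = 0" for y
  proof -
    have "f (0 + 0) y = f 0 y + f 0 y" using assms unfolding bilinear_op_def by blast
    then show ?thesis by simp
  qed
  have z2: "f y 0 = 0" for y
  proof -
    have "f y (0 + 0) = f y 0 + f y 0" using assms unfolding bilinear_op_def by blast
    then show ?thesis by simp
  qed
  show "f 0 y = 0" "f y 0 = 0" by (rule z1, rule z2)
  have m1: "f (- x) y = - f x y" for x y
  proof -
    have "f (- x + x) y = f (- x) y + f x y" using assms unfolding bilinear_op_def by blast
    then show ?thesis using z1 by (simp add: eq_neg_iff_add_eq_0)
  qed
  have m2: "f y (- x) = - f y x" for x y
  proof -
    have "f y (- x + x) = f y (- x) + f y x" using assms unfolding bilinear_op_def by blast
    then show ?thesis using z2 by (simp add: eq_neg_iff_add_eq_0)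
  qed
  show "f (- x) y = - f x y" "f y (- x) = - f y x" by (rule m1, rule m2)
  have "f (x + - y) z = f x z + f (- y) z" "f z (x + - y) = f z x + f z (- y)"
    using assms unfolding bilinear_op_def by blast+
  then show "f (x - y) z = f x z - f y z" "f z (x - y) = f z x - f z y"
    by (simp_all add: m1 m2)
qed

lemmas prec_laws[simp] = bop_laws[OF bop(1)]
lemmas dot_laws[simp] = bop_laws[OF bop(2)]
lemmas succ_laws[simp] = bop_laws[OF bop(3)]

lemma sA_simps[simp]:
  "scaleA sc k (a + b) = scaleA sc k a + scaleA sc k b"
  "scaleA sc (k + l) a = scaleA sc k a + scaleA sc l a"
  "scaleA sc k (scaleA sc l a) = scaleA sc (k * l) a"
  "scaleA sc 1 a = a"
  "scaleA sc 0 a = 0"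
  "scaleA sc k 0 = 0"
  "fst (scaleA sc k a) = sc k (fst a)"
  "snd (scaleA sc k a) = k * snd a"
  "scaleA sc k (incl h) = incl (sc k h)"
  "scaleA sc k unitA = (0, k)"
  by (auto simp: scaleA_def vs.scale_right_distrib vs.scale_left_distrib algebra_simps
      incl_def unitA_def zero_prod_def)

lemma incl_simps[simp]:
  "incl (u + v) = incl u + (incl v :: ('h,'k) aug)"
  "incl (0::'h) = (0 :: ('h,'k) aug)"
  "fst (incl u :: ('h,'k) aug) = u" "snd (incl u :: ('h,'k) aug) = 0"
  "fst (unitA :: ('h,'k) aug) = 0" "snd (unitA :: ('h,'k) aug) = 1"
  "incl (- u) = - (incl u :: ('h,'k) aug)"
  "incl (u - v) = incl u - (incl v :: ('h,'k) aug)"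
  by (auto simp: incl_def unitA_def zero_prod_def)

lemma aug_decomp: "c = incl (fst c) + scaleA sc (snd c) unitA"
  by (cases c) (simp add: incl_def unitA_def scaleA_def)

definition linA :: "(('h,'k) aug \<Rightarrow> ('h,'k) aug) \<Rightarrow> bool" where
  "linA L \<longleftrightarrow> (\<forall>a b. L (a + b) = L a + L b) \<and> (\<forall>k a. L (scaleA sc k a) = scaleA sc k (L a))"

definition linH :: "(('h,'k) aug \<Rightarrow> 'h) \<Rightarrow> bool" where
  "linH L \<longleftrightarrow> (\<forall>a b. L (a + b) = L a + L b) \<and> (\<forall>k a. L (scaleA sc k a) = sc k (L a))"

definition linK :: "(('h,'k) aug \<Rightarrow> 'k) \<Rightarrow> bool" where
  "linK L \<longleftrightarrow> (\<forall>a b. L (a + b) = L a + L b) \<and> (\<forall>k a. L (scaleA sc k a) = k * (L a))"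

lemma bf_laws:
  assumes "bilinear_form sc \<phi>"
  shows "\<phi> (a + a') b = \<phi> a b + \<phi> a' b" "\<phi> a (b + b') = \<phi> a b + \<phi> a b'"
    "\<phi> (scaleA sc k a) b = k * \<phi> a b" "\<phi> a (scaleA sc k b) = k * \<phi> a b"
    "\<phi> 0 b = 0" "\<phi> a 0 = 0"
proof -
  have A: "\<phi> (a + a') b = \<phi> a b + \<phi> a' b" "\<phi> a (b + b') = \<phi> a b + \<phi> a b'"
    "\<phi> (scaleA sc k a) b = k * \<phi> a b" "\<phi> a (scaleA sc k b) = k * \<phi> a b" for a a' b b' k
    using assms unfolding bilinear_form_def by blast+
  show "\<phi> (a + a') b = \<phi> a b + \<phi> a' b" "\<phi> a (b + b') = \<phi> a b + \<phi> a b'"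
    "\<phi> (scaleA sc k a) b = k * \<phi> a b" "\<phi> a (scaleA sc k b) = k * \<phi> a b"
    by (rule A)+
  show "\<phi> 0 b = 0" using A(3)[of 0 0 b] by simp
  show "\<phi> a 0 = 0" using A(4)[of a 0 0] by simp
qed

lemma bf_sum:
  assumes "\<And>p. p \<in> set u \<Longrightarrow> bilinear_form sc (G p)"
  shows "bilinear_form sc (\<lambda>a b. sum_list (map (\<lambda>p. G p a b) u))"
  using assms
proof (induction u)
  case Nil
  then show ?case by (simp add: bilinear_form_def)
next
  case (Cons p u)
  have A: "bilinear_form sc (G p)" using Cons by simp
  have B: "bilinear_form sc (\<lambda>a b. sum_list (map (\<lambda>p. G p a b) u))" using Cons by simp
  show ?case using A B unfolding bilinear_form_def by (simp add: algebra_simps del: split_paired_All)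
qed

lemma bf_comp:
  assumes "bilinear_form sc \<phi>" "linA L1" "linA L2"
  shows "bilinear_form sc (\<lambda>a b. \<phi> (L1 a) (L2 b))"
  using assms unfolding bilinear_form_def linA_def by (simp del: split_paired_All)

lemma bf_prodK:
  assumes "linK f1" "linK f2"
  shows "bilinear_form sc (\<lambda>a b. f1 a * f2 b * c)"
  using assms unfolding bilinear_form_def linK_def by (simp add: algebra_simps del: split_paired_All)

lemma bf_add:
  assumes "bilinear_form sc \<phi>" "bilinear_form sc \<psi>"
  shows "bilinear_form sc (\<lambda>a b. \<phi> a b + \<psi> a b)"
  using assms unfolding bilinear_form_def by (simp add: algebra_simps del: split_paired_All)

lemma linA_incl: "linH L \<Longrightarrow> linA (\<lambda>a. incl (L a))"
  unfolding linA_def linH_def by (simp del: split_paired_All)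

lemma linK_comp: "bilinear_form sc \<phi> \<Longrightarrow> linA L \<Longrightarrow> linK (\<lambda>a. \<phi> (L a) b)"
  unfolding linA_def linK_def bilinear_form_def by (simp del: split_paired_All)

lemma linK_snd: "linK snd"
  unfolding linK_def by simp

abbreviation star where "star \<equiv> starA sc prec dot succ q"

lemma star_lin1: "linA (\<lambda>a. star a c)"
  unfolding linA_def starA_def
  by (auto simp: vs.scale_right_distrib vs.scale_left_distrib algebra_simps scaleA_def)

lemma star_lin2: "linA (\<lambda>c. star a c)"
  unfolding linA_def starA_def
  by (auto simp: vs.scale_right_distrib vs.scale_left_distrib algebra_simps scaleA_def)

lemma ext_lin:
  "linH (\<lambda>a. ext_succ sc succ a c)" "linH (\<lambda>c. ext_succ sc succ a c)"
  "linH (\<lambda>a. ext_dot dot a c)" "linH (\<lambda>c. ext_dot dot a c)"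
  "linH (\<lambda>a. ext_prec sc prec a c)" "linH (\<lambda>c. ext_prec sc prec a c)"
  unfolding linH_def ext_succ_def ext_dot_def ext_prec_def
  by (auto simp: vs.scale_right_distrib vs.scale_left_distrib algebra_simps)


lemma Phi_alt: "Phi \<phi> t = sum_list (map (\<lambda>p. \<phi> (fst p) (snd p)) t)"
  by (induction t) auto

definition tterm where
  "tterm \<phi> st E a b c d = \<phi> (st a c) (incl (E b d)) + \<phi> (scaleA sc (snd b * snd d) (incl (E a c))) unitA"

lemma Phi_tprod: "Phi \<phi> (tprod sc st E t u) =
   sum_list (map (\<lambda>p. sum_list (map (\<lambda>r. tterm \<phi> st E (fst p) (snd p) (fst r) (snd r)) u)) t)"
  unfolding tprod_def Phi_concat by (simp add: o_def case_prod_beta tterm_def Phi_concat)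

lemma bf_second1:
  assumes "bilinear_form sc \<phi>" "linA L"
  shows "bilinear_form sc (\<lambda>a b. \<phi> (scaleA sc (snd b * s) (L a)) w)"
  using assms unfolding bilinear_form_def linA_def by (simp add: algebra_simps del: split_paired_All)

lemma bf_second2:
  assumes "bilinear_form sc \<phi>" "linA L"
  shows "bilinear_form sc (\<lambda>c d. \<phi> (scaleA sc (s * snd d) (L c)) w)"
  using assms unfolding bilinear_form_def linA_def by (simp add: algebra_simps del: split_paired_All)

lemma tterm_bf1:
  assumes "bilinear_form sc \<phi>" "\<And>c. linH (\<lambda>a. E a c)" "\<And>a. linH (\<lambda>c. E a c)"
  shows "bilinear_form sc (\<lambda>a b. tterm \<phi> star E a b c d)"
  unfolding tterm_def
  by (rule bf_add[OF bf_comp[OF assms(1) star_lin1 linA_incl[OF assms(2)]]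
        bf_second1[OF assms(1) linA_incl[OF assms(2)]]])

lemma tterm_bf2:
  assumes "bilinear_form sc \<phi>" "\<And>c. linH (\<lambda>a. E a c)" "\<And>a. linH (\<lambda>c. E a c)"
  shows "bilinear_form sc (\<lambda>c d. tterm \<phi> star E a b c d)"
  unfolding tterm_def
  by (rule bf_add[OF bf_comp[OF assms(1) star_lin2 linA_incl[OF assms(3)]]
        bf_second2[OF assms(1) linA_incl[OF assms(3)]]])

lemma tprod_resp1:
  assumes "teq sc t t'" "\<And>c. linH (\<lambda>a. E a c)" "\<And>a. linH (\<lambda>c. E a c)"
  shows "teq sc (tprod sc star E t u) (tprod sc star E t' u)"
  unfolding teq_Phi
proof (intro allI impI)
  fix \<phi> assume bf: "bilinear_form sc \<phi>"
  let ?\<psi> = "\<lambda>a b. sum_list (map (\<lambda>r. tterm \<phi> star E a b (fst r) (snd r)) u)"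
  have "bilinear_form sc ?\<psi>"
    by (rule bf_sum[where G="\<lambda>r a b. tterm \<phi> star E a b (fst r) (snd r)"])
       (rule tterm_bf1[OF bf assms(2,3)])
  then have "Phi ?\<psi> t = Phi ?\<psi> t'" using assms(1) unfolding teq_Phi by blast
  then show "Phi \<phi> (tprod sc star E t u) = Phi \<phi> (tprod sc star E t' u)"
    unfolding Phi_tprod by (simp add: Phi_alt)
qed

lemma tprod_resp2:
  assumes "teq sc u u'" "\<And>c. linH (\<lambda>a. E a c)" "\<And>a. linH (\<lambda>c. E a c)"
  shows "teq sc (tprod sc star E t u) (tprod sc star E t u')"
  unfolding teq_Phi
proof (intro allI impI)
  fix \<phi> assume bf: "bilinear_form sc \<phi>"
  let ?\<psi> = "\<lambda>c d. sum_list (map (\<lambda>p. tterm \<phi> star E (fst p) (snd p) c d) t)"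
  have "bilinear_form sc ?\<psi>"
    by (rule bf_sum[where G="\<lambda>p c d. tterm \<phi> star E (fst p) (snd p) c d"])
       (rule tterm_bf2[OF bf assms(2,3)])
  then have "Phi ?\<psi> u = Phi ?\<psi> u'" using assms(1) unfolding teq_Phi by blast
  then show "Phi \<phi> (tprod sc star E t u) = Phi \<phi> (tprod sc star E t u')"
    unfolding Phi_tprod by (simp add: Phi_alt sum_list_swap[where u=u] sum_list_swap[where u=u'])
qed

lemma teq_refl[simp]: "teq sc t t" by (simp add: teq_def)
lemma teq_sym: "teq sc t u \<Longrightarrow> teq sc u t" by (simp add: teq_def)
lemma teq_trans: "teq sc t u \<Longrightarrow> teq sc u v \<Longrightarrow> teq sc t v" by (simp add: teq_def)
lemma teq_app: "teq sc t t' \<Longrightarrow> teq sc u u' \<Longrightarrow> teq sc (t @ u) (t' @ u')"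
  by (simp add: teq_Phi)

lemma Phi_tscale: "bilinear_form sc \<phi> \<Longrightarrow> Phi \<phi> (tscale sc c t) = c * Phi \<phi> t"
  by (induction t) (auto simp: tscale_def bf_laws algebra_simps)

lemma teq_tscale: "teq sc t t' \<Longrightarrow> teq sc (tscale sc c t) (tscale sc c t')"
  by (simp add: teq_Phi Phi_tscale)

lemma \<Delta>_add: "teq sc (\<Delta> (x + y)) (\<Delta> x @ \<Delta> y)"
  using bialg by (simp add: q_tridendriform_bialgebra_def)
lemma \<Delta>_scale: "teq sc (\<Delta> (sc c x)) (tscale sc c (\<Delta> x))"
  using bialg by (simp add: q_tridendriform_bialgebra_def)
lemma \<Delta>_succ: "teq sc (\<Delta> (succ x y)) (tprod sc star (ext_succ sc succ) (\<Delta> x) (\<Delta> y))"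
  using bialg by (simp add: q_tridendriform_bialgebra_def)
lemma \<Delta>_dot: "teq sc (\<Delta> (dot x y)) (tprod sc star (ext_dot dot) (\<Delta> x) (\<Delta> y))"
  using bialg by (simp add: q_tridendriform_bialgebra_def)
lemma \<Delta>_prec: "teq sc (\<Delta> (prec x y)) (tprod sc star (ext_prec sc prec) (\<Delta> x) (\<Delta> y))"
  using bialg by (simp add: q_tridendriform_bialgebra_def)
lemma counitL: "sum_list (map (\<lambda>(a,b). scaleA sc (eps a) b) (\<Delta> x)) = incl x"
  using bialg by (simp add: q_tridendriform_bialgebra_def)
lemma counitR: "sum_list (map (\<lambda>(a,b). scaleA sc (eps b) a) (\<Delta> x)) = incl x"
  using bialg by (simp add: q_tridendriform_bialgebra_def)


abbreviation Pl :: "'h \<Rightarrow> ('h,'k) tens" where "Pl x \<equiv> [(incl x, unitA), (unitA, incl x)]"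

lemma star_unit[simp]: "star unitA c = c" "star c unitA = c"
  by (auto simp: starA_def unitA_def intro: prod_eqI)

lemma ext_unit[simp]:
  "ext_prec sc prec unitA d = sc (snd d) 0"
  "ext_dot dot unitA d = 0" "ext_dot dot d unitA = 0"
  "ext_prec sc prec d unitA = fst d"
  "ext_succ sc succ d unitA = 0"
  "ext_succ sc succ unitA d = fst d"
  "ext_prec sc prec (incl a) (incl b) = prec a b"
  "ext_succ sc succ (incl a) (incl b) = succ a b"
  "ext_dot dot (incl a) (incl b) = dot a b"
  "ext_prec sc prec (incl a) d = prec a (fst d) + sc (snd d) a"
  "ext_succ sc succ d (incl a) = succ (fst d) a + sc (snd d) a"
  "ext_dot dot (incl a) d = dot a (fst d)"
  "ext_dot dot d (incl a) = dot (fst d) a"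
  by (simp_all add: ext_prec_def ext_dot_def ext_succ_def unitA_def incl_def)

lemma bf_incl:
  assumes "bilinear_form sc \<phi>"
  shows "\<phi> (incl (u + v)) w = \<phi> (incl u) w + \<phi> (incl v) w"
    "\<phi> w (incl (u + v)) = \<phi> w (incl u) + \<phi> w (incl v)"
    "\<phi> (incl (sc k u)) w = k * \<phi> (incl u) w"
    "\<phi> w (incl (sc k u)) = k * \<phi> w (incl u)"
    "\<phi> (incl (u - v)) w = \<phi> (incl u) w - \<phi> (incl v) w"
    "\<phi> w (incl (u - v)) = \<phi> w (incl u) - \<phi> w (incl v)"
    "\<phi> (incl (- u)) w = - \<phi> (incl u) w"
    "\<phi> w (incl (- u)) = - \<phi> w (incl u)"
    "\<phi> (incl 0) w = 0" "\<phi> w (incl 0) = 0"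
proof -
  note L = bf_laws[OF assms]
  have i1: "incl (sc k u) = scaleA sc k (incl u)" for k u by (simp only: sA_simps(9))
  have i2: "incl (- u) = scaleA sc (-1) (incl u)" for u by (simp add: incl_def scaleA_def)
  have i3: "incl (u - v) = incl u + scaleA sc (-1) (incl v)" for u v by (simp add: incl_def scaleA_def)
  show "\<phi> (incl (u + v)) w = \<phi> (incl u) w + \<phi> (incl v) w"
    "\<phi> w (incl (u + v)) = \<phi> w (incl u) + \<phi> w (incl v)"
    by (simp only: incl_simps(1) L)+
  show "\<phi> (incl (sc k u)) w = k * \<phi> (incl u) w" "\<phi> w (incl (sc k u)) = k * \<phi> w (incl u)"
    by (simp only: i1 L)+
  show "\<phi> (incl (- u)) w = - \<phi> (incl u) w" "\<phi> w (incl (- u)) = - \<phi> w (incl u)"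
    by (simp only: i2 L mult_minus1)+
  show "\<phi> (incl (u - v)) w = \<phi> (incl u) w - \<phi> (incl v) w"
      "\<phi> w (incl (u - v)) = \<phi> w (incl u) - \<phi> w (incl v)"
    by (simp only: i3 L mult_minus1, simp)+
  show "\<phi> (incl 0) w = 0" "\<phi> w (incl 0) = 0" by (simp_all only: incl_simps(2) L)
qed

lemma linK_sum_list:
  assumes "linK \<psi>"
  shows "\<psi> (sum_list (map g xs)) = sum_list (map (\<lambda>p. \<psi> (g p)) xs)"
proof -
  have a: "\<psi> (a + b) = \<psi> a + \<psi> b" for a b using assms unfolding linK_def by blast
  have "\<psi> (scaleA sc 0 0) = 0 * \<psi> 0" using assms unfolding linK_def by blast
  then have z: "\<psi> 0 = 0" by simp
  show ?thesis by (induction xs) (simp_all add: a z)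
qed

lemma counit1:
  assumes "linK \<psi>"
  shows "sum_list (map (\<lambda>p. snd (snd p) * \<psi> (fst p)) (\<Delta> Q)) = \<psi> (incl Q)"
proof -
  have "\<psi> (incl Q) = \<psi> (sum_list (map (\<lambda>p. scaleA sc (snd (snd p)) (fst p)) (\<Delta> Q)))"
    using counitR[of Q, unfolded split_def eps_def] by simp
  also have "\<dots> = sum_list (map (\<lambda>p. snd (snd p) * \<psi> (fst p)) (\<Delta> Q))"
  proof -
    have hs: "\<psi> (scaleA sc k a) = k * \<psi> a" for k a using assms unfolding linK_def by blast
    show ?thesis by (simp add: linK_sum_list[OF assms] hs)
  qed
  finally show ?thesis by simp
qed

lemma counit2:
  assumes "linK \<psi>"
  shows "sum_list (map (\<lambda>p. snd (fst p) * \<psi> (snd p)) (\<Delta> Q)) = \<psi> (incl Q)"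
proof -
  have "\<psi> (incl Q) = \<psi> (sum_list (map (\<lambda>p. scaleA sc (snd (fst p)) (snd p)) (\<Delta> Q)))"
    using counitL[of Q, unfolded split_def eps_def] by simp
  also have "\<dots> = sum_list (map (\<lambda>p. snd (fst p) * \<psi> (snd p)) (\<Delta> Q))"
  proof -
    have hs: "\<psi> (scaleA sc k a) = k * \<psi> a" for k a using assms unfolding linK_def by blast
    show ?thesis by (simp add: linK_sum_list[OF assms] hs)
  qed
  finally show ?thesis by simp
qed

lemma bf_decomp1:
  assumes "bilinear_form sc \<phi>"
  shows "\<phi> c w = \<phi> (incl (fst c)) w + snd c * \<phi> unitA w"
proof -
  have "\<phi> c w = \<phi> (incl (fst c) + scaleA sc (snd c) unitA) w" by (subst aug_decomp[of c]) simp
  then show ?thesis by (simp only: bf_laws[OF assms])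
qed

lemma linK_comp2: "bilinear_form sc \<phi> \<Longrightarrow> linA L \<Longrightarrow> linK (\<lambda>a. \<phi> b (L a))"
  unfolding linA_def linK_def bilinear_form_def by (simp del: split_paired_All)

lemma sum_decomp:
  assumes "bilinear_form sc \<phi>" "linA W"
  shows "sum_list (map (\<lambda>p. \<phi> (fst p) (W (snd p))) (\<Delta> Q)) =
         sum_list (map (\<lambda>p. \<phi> (incl (fst (fst p))) (W (snd p))) (\<Delta> Q)) + \<phi> unitA (W (incl Q))"
proof -
  have "sum_list (map (\<lambda>p. \<phi> (fst p) (W (snd p))) (\<Delta> Q)) =
        sum_list (map (\<lambda>p. \<phi> (incl (fst (fst p))) (W (snd p)) + snd (fst p) * \<phi> unitA (W (snd p))) (\<Delta> Q))"
    by (rule arg_cong[where f=sum_list], rule map_cong, simp, rule bf_decomp1[OF assms(1)])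
  also have "\<dots> = sum_list (map (\<lambda>p. \<phi> (incl (fst (fst p))) (W (snd p))) (\<Delta> Q)) + \<phi> unitA (W (incl Q))"
    by (simp only: sum_list_map_add counit2[OF linK_comp2[OF assms]]) 
  finally show ?thesis .
qed


lemma linH_basic:
  "linH fst"
  "bilinear_op sc f \<Longrightarrow> linH (\<lambda>c. f x (fst c))"
  "bilinear_op sc f \<Longrightarrow> linH (\<lambda>c. f (fst c) x)"
  unfolding linH_def bilinear_op_def by (simp_all del: split_paired_All)

lemma linK_phi:
  assumes "bilinear_form sc \<phi>" "linH L"
  shows "linK (\<lambda>c. \<phi> (incl (L c)) w)" "linK (\<lambda>c. \<phi> w (incl (L c)))"
  using linK_comp[OF assms(1) linA_incl[OF assms(2)]] linK_comp2[OF assms(1) linA_incl[OF assms(2)]]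
  by auto

lemma linK_phi_id:
  assumes "bilinear_form sc \<phi>"
  shows "linK (\<lambda>c. \<phi> c w)" "linK (\<lambda>c. \<phi> w c)" "linK (\<lambda>c. snd c * k)"
  using assms unfolding linK_def bilinear_form_def by (simp_all add: algebra_simps del: split_paired_All)

lemma prim_Phi: "primitive sc \<Delta> x \<Longrightarrow> bilinear_form sc \<phi> \<Longrightarrow> Phi \<phi> (\<Delta> x) = Phi \<phi> (Pl x)"
  unfolding primitive_def teq_Phi by blast

lemma D_prec_left:
  assumes px: "primitive sc \<Delta> x" and bf: "bilinear_form sc \<phi>"
  shows "Phi \<phi> (\<Delta> (prec x Q)) = \<phi> (incl (prec x Q)) unitA + \<phi> unitA (incl (prec x Q))
     + sum_list (map (\<lambda>p. \<phi> (incl (fst (fst p))) (incl (prec x (fst (snd p))))) (\<Delta> Q))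
     + \<phi> (incl Q) (incl x)"
proof -
  have "teq sc (\<Delta> (prec x Q)) (tprod sc star (ext_prec sc prec) (Pl x) (\<Delta> Q))"
    by (rule teq_trans[OF \<Delta>_prec tprod_resp1[OF px[unfolded primitive_def] ext_lin(5,6)]])
  then have 1: "Phi \<phi> (\<Delta> (prec x Q)) = Phi \<phi> (tprod sc star (ext_prec sc prec) (Pl x) (\<Delta> Q))"
    using bf unfolding teq_Phi by blast
  have 2: "Phi \<phi> (tprod sc star (ext_prec sc prec) (Pl x) (\<Delta> Q)) =
     sum_list (map (\<lambda>p. snd (snd p) * \<phi> (incl (prec x (fst (fst p)))) unitA) (\<Delta> Q))
   + sum_list (map (\<lambda>p. snd (snd p) * (snd (fst p) * \<phi> (incl x) unitA)) (\<Delta> Q))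
   + sum_list (map (\<lambda>p. \<phi> (fst p) (incl (prec x (fst (snd p))))) (\<Delta> Q))
   + sum_list (map (\<lambda>p. snd (snd p) * \<phi> (fst p) (incl x)) (\<Delta> Q))"
    by (simp add: Phi_tprod tterm_def bf_laws[OF bf] bf_incl[OF bf] sum_list_map_add algebra_simps)
  show ?thesis
    unfolding 1 2
    by (simp add: counit1[OF linK_phi(1)[OF bf linH_basic(2)[OF bop(1)]]]
        counit1[OF linK_phi_id(3)[OF bf]] counit1[OF linK_phi_id(1)[OF bf]]
        sum_decomp[OF bf linA_incl[OF linH_basic(2)[OF bop(1)]]])
qed


lemma D_succ_right:
  assumes px: "primitive sc \<Delta> x" and bf: "bilinear_form sc \<phi>"
  shows "Phi \<phi> (\<Delta> (succ Q x)) = \<phi> (incl (succ Q x)) unitA + \<phi> unitA (incl (succ Q x))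
     + sum_list (map (\<lambda>p. \<phi> (incl (fst (fst p))) (incl (succ (fst (snd p)) x))) (\<Delta> Q))
     + \<phi> (incl Q) (incl x)"
proof -
  have "teq sc (\<Delta> (succ Q x)) (tprod sc star (ext_succ sc succ) (\<Delta> Q) (Pl x))"
    by (rule teq_trans[OF \<Delta>_succ tprod_resp2[OF px[unfolded primitive_def] ext_lin(1,2)]])
  then have 1: "Phi \<phi> (\<Delta> (succ Q x)) = Phi \<phi> (tprod sc star (ext_succ sc succ) (\<Delta> Q) (Pl x))"
    using bf unfolding teq_Phi by blast
  have 2: "Phi \<phi> (tprod sc star (ext_succ sc succ) (\<Delta> Q) (Pl x)) =
     sum_list (map (\<lambda>p. snd (snd p) * \<phi> (incl (succ (fst (fst p)) x)) unitA) (\<Delta> Q))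
   + sum_list (map (\<lambda>p. snd (snd p) * (snd (fst p) * \<phi> (incl x) unitA)) (\<Delta> Q))
   + sum_list (map (\<lambda>p. \<phi> (fst p) (incl (succ (fst (snd p)) x))) (\<Delta> Q))
   + sum_list (map (\<lambda>p. snd (snd p) * \<phi> (fst p) (incl x)) (\<Delta> Q))"
    by (simp add: Phi_tprod tterm_def bf_laws[OF bf] bf_incl[OF bf] sum_list_map_add algebra_simps)
  show ?thesis
    unfolding 1 2
    by (simp add: counit1[OF linK_phi(1)[OF bf linH_basic(3)[OF bop(3)]]]
        counit1[OF linK_phi_id(3)[OF bf]] counit1[OF linK_phi_id(1)[OF bf]]
        sum_decomp[OF bf linA_incl[OF linH_basic(3)[OF bop(3)]]])
qed

lemma D_dot_right:
  assumes px: "primitive sc \<Delta> x" and bf: "bilinear_form sc \<phi>"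
  shows "Phi \<phi> (\<Delta> (dot Q x)) = \<phi> (incl (dot Q x)) unitA + \<phi> unitA (incl (dot Q x))
     + sum_list (map (\<lambda>p. \<phi> (incl (fst (fst p))) (incl (dot (fst (snd p)) x))) (\<Delta> Q))"
proof -
  have "teq sc (\<Delta> (dot Q x)) (tprod sc star (ext_dot dot) (\<Delta> Q) (Pl x))"
    by (rule teq_trans[OF \<Delta>_dot tprod_resp2[OF px[unfolded primitive_def] ext_lin(3,4)]])
  then have 1: "Phi \<phi> (\<Delta> (dot Q x)) = Phi \<phi> (tprod sc star (ext_dot dot) (\<Delta> Q) (Pl x))"
    using bf unfolding teq_Phi by blast
  have 2: "Phi \<phi> (tprod sc star (ext_dot dot) (\<Delta> Q) (Pl x)) =
     sum_list (map (\<lambda>p. snd (snd p) * \<phi> (incl (dot (fst (fst p)) x)) unitA) (\<Delta> Q))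
   + sum_list (map (\<lambda>p. \<phi> (fst p) (incl (dot (fst (snd p)) x))) (\<Delta> Q))"
    by (simp add: Phi_tprod tterm_def bf_laws[OF bf] bf_incl[OF bf] sum_list_map_add algebra_simps)
  show ?thesis
    unfolding 1 2
    by (simp add: counit1[OF linK_phi(1)[OF bf linH_basic(3)[OF bop(2)]]]
        sum_decomp[OF bf linA_incl[OF linH_basic(3)[OF bop(2)]]])
qed

definition linF :: "('h \<Rightarrow> 'h) \<Rightarrow> bool" where
  "linF f \<longleftrightarrow> (\<forall>u v. f (u + v) = f u + f v) \<and> (\<forall>k u. f (sc k u) = sc k (f u))"

lemma linF_laws:
  assumes "linF f"
  shows "f (u + v) = f u + f v" "f (sc k u) = sc k (f u)" "f 0 = 0"
proof -
  show a: "f (u + v) = f u + f v" "f (sc k u) = sc k (f u)" using assms unfolding linF_def by blast+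
  have "f (sc 0 0) = sc 0 (f 0)" using assms unfolding linF_def by blast
  then show "f 0 = 0" by simp
qed

definition gmap :: "('h \<Rightarrow> 'h) \<Rightarrow> ('h,'k) tens \<Rightarrow> ('h,'k) tens" where
  "gmap f t = map (\<lambda>p. (incl (fst (fst p)), incl (f (fst (snd p))))) t"

lemma Phi_gmap: "Phi \<phi> (gmap f t) = Phi (\<lambda>c d. \<phi> (incl (fst c)) (incl (f (fst d)))) t"
  by (simp add: gmap_def Phi_alt o_def)

lemma gmap_resp:
  assumes "linF f" "teq sc t t'"
  shows "teq sc (gmap f t) (gmap f t')"
  unfolding teq_Phi
proof (intro allI impI)
  fix \<phi> assume bf: "bilinear_form sc \<phi>"
  have lf: "linH (\<lambda>d. f (fst d))" using assms(1) unfolding linH_def linF_def by (simp del: split_paired_All)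
  have "bilinear_form sc (\<lambda>c d. \<phi> (incl (fst c)) (incl (f (fst d))))"
    by (rule bf_comp[OF bf linA_incl[OF linH_basic(1)] linA_incl[OF lf]])
  then show "Phi \<phi> (gmap f t) = Phi \<phi> (gmap f t')"
    using assms(2) unfolding Phi_gmap teq_Phi by blast
qed

lemma D_gmap_prec:
  assumes pa: "primitive sc \<Delta> a" and bf: "bilinear_form sc \<phi>" and lf: "linF f"
  shows "Phi \<phi> (gmap f (\<Delta> (prec a Q))) =
       sum_list (map (\<lambda>p. \<phi> (incl (fst (fst p))) (incl (f (prec a (fst (snd p)))))) (\<Delta> Q))
     + \<phi> (incl Q) (incl (f a))"
proof -
  have "teq sc (\<Delta> (prec a Q)) (tprod sc star (ext_prec sc prec) (Pl a) (\<Delta> Q))"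
    by (rule teq_trans[OF \<Delta>_prec tprod_resp1[OF pa[unfolded primitive_def] ext_lin(5,6)]])
  then have 1: "Phi \<phi> (gmap f (\<Delta> (prec a Q))) = Phi \<phi> (gmap f (tprod sc star (ext_prec sc prec) (Pl a) (\<Delta> Q)))"
    using bf gmap_resp[OF lf] unfolding teq_Phi by blast
  have 2: "Phi \<phi> (gmap f (tprod sc star (ext_prec sc prec) (Pl a) (\<Delta> Q))) =
     sum_list (map (\<lambda>p. \<phi> (incl (fst (fst p))) (incl (f (prec a (fst (snd p)))))) (\<Delta> Q))
   + sum_list (map (\<lambda>p. snd (snd p) * \<phi> (incl (fst (fst p))) (incl (f a))) (\<Delta> Q))"
    by (simp add: Phi_gmap Phi_tprod tterm_def bf_laws[OF bf] bf_incl[OF bf] sum_list_map_add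
        algebra_simps linF_laws[OF lf])
  show ?thesis
    unfolding 1 2
    by (simp add: counit1[OF linK_phi(1)[OF bf linH_basic(1)]])
qed

lemma Phi_\<Delta>_lin:
  assumes bf: "bilinear_form sc \<phi>"
  shows "Phi \<phi> (\<Delta> (u + v)) = Phi \<phi> (\<Delta> u) + Phi \<phi> (\<Delta> v)"
    "Phi \<phi> (\<Delta> (sc k u)) = k * Phi \<phi> (\<Delta> u)"
    "Phi \<phi> (\<Delta> (- u)) = - Phi \<phi> (\<Delta> u)"
    "Phi \<phi> (\<Delta> (u - v)) = Phi \<phi> (\<Delta> u) - Phi \<phi> (\<Delta> v)"
proof -
  show a: "Phi \<phi> (\<Delta> (u + v)) = Phi \<phi> (\<Delta> u) + Phi \<phi> (\<Delta> v)" for u v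
    using \<Delta>_add[of u v] bf unfolding teq_Phi by simp
  show s: "Phi \<phi> (\<Delta> (sc k u)) = k * Phi \<phi> (\<Delta> u)" for k u
    using \<Delta>_scale[of k u] bf unfolding teq_Phi by (simp add: Phi_tscale)
  have m: "- u = sc (-1) u" for u by simp
  show n: "Phi \<phi> (\<Delta> (- u)) = - Phi \<phi> (\<Delta> u)" for u
    by (subst m) (simp only: s, simp)
  show "Phi \<phi> (\<Delta> (u - v)) = Phi \<phi> (\<Delta> u) - Phi \<phi> (\<Delta> v)"
    by (simp only: diff_conv_add_uminus a n)
qed


abbreviation T where "T \<equiv> tsucc sc q dot succ"
abbreviation M where "M \<equiv> M1 sc q prec dot succ"

lemma ax1: "prec (prec a b) c = prec a (prec b c + succ b c + sc q (dot b c))"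
  using tri unfolding q_tridendriform_def by (elim conjE) (drule spec)+
lemma ax2: "prec (succ a b) c = succ a (prec b c)"
  using tri unfolding q_tridendriform_def by (elim conjE) (drule spec)+
lemma ax7: "prec (dot a b) c = dot a (prec b c)"
  using tri unfolding q_tridendriform_def by (elim conjE) (drule spec)+

definition Mterm where
  "Mterm x zs i = (let L = (if i = 0 then x else T (omega_prec prec (take i zs)) x)
           in if i = length zs then L
              else prec L (omega_tsucc T (drop i zs)))"

lemma M_alt: "M x zs = (\<Sum>i\<le>length zs. sc ((-1) ^ (length zs - i)) (Mterm x zs i))"
  unfolding M1_def Mterm_def atLeast0AtMost ..

lemma M_nil: "M x [] = x"
  by (simp add: M_alt Mterm_def)

lemma M_single: "M x [Q] = sc q (dot Q x) + succ Q x - prec x Q"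
  by (simp add: M_alt Mterm_def omega_tsucc_def tsucc_def)

lemma omegaT_snoc: "omega_tsucc T (d @ [a, b]) = T (omega_tsucc T (d @ [a])) b"
  by (cases d) (simp_all add: omega_tsucc_def)

lemma omegaT_prec: "omega_tsucc T (d @ [prec a b]) = prec (omega_tsucc T (d @ [a])) b"
proof (cases d)
  case Nil
  then show ?thesis by (simp add: omega_tsucc_def)
next
  case (Cons d0 ds)
  have "T W (prec a b) = prec (T W a) b" for W
    by (simp add: tsucc_def ax2 ax7)
  then show ?thesis using Cons by (simp add: omega_tsucc_def)
qed

lemma omegaP_prec: "omega_prec prec (ys @ [a, b]) = omega_prec prec (ys @ [prec a b])"
proof (induction ys)
  case Nil
  then show ?case by simp
next
  case (Cons y ys)
  then show ?case by (cases ys) simp_all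
qed

lemma Mterm_low:
  assumes "i \<le> length ys"
  shows "Mterm x (ys @ [a, b]) i = prec (Mterm x (ys @ [a]) i) b - Mterm x (ys @ [prec a b]) i"
proof -
  define L where "L = (if i = 0 then x else T (omega_prec prec (take i ys)) x)"
  define W where "W = omega_tsucc T (drop i ys @ [a])"
  have e1: "Mterm x (ys @ [a, b]) i = prec L (T W b)"
    using assms unfolding Mterm_def L_def W_def Let_def by (simp add: omegaT_snoc)
  have e2: "Mterm x (ys @ [a]) i = prec L W"
    using assms unfolding Mterm_def L_def W_def Let_def by simp
  have e3: "Mterm x (ys @ [prec a b]) i = prec L (prec W b)"
    using assms unfolding Mterm_def L_def W_def Let_def by (simp add: omegaT_prec)
  show ?thesis unfolding e1 e2 e3 by (simp add: ax1 tsucc_def)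
qed

lemma prec_sum: "prec (sum g A) b = (\<Sum>i\<in>A. prec (g i) b)"
proof (induction A rule: infinite_finite_induct)
  case (insert x F)
  then show ?case by (simp only: sum.insert[OF insert(1,2)] prec_laws(1) insert(3))
qed simp_all

lemma M_rec: "M x (ys @ [a, b]) = M x (ys @ [prec a b]) - prec (M x (ys @ [a])) b"
proof -
  let ?n = "length ys"
  have low: "sc ((-1) ^ (Suc (Suc ?n) - i)) (Mterm x (ys @ [a, b]) i) =
     sc ((-1) ^ (Suc ?n - i)) (Mterm x (ys @ [prec a b]) i)
     - sc ((-1) ^ (Suc ?n - i)) (prec (Mterm x (ys @ [a]) i) b)" if "i \<in> {..?n}" for i
  proof -
    have i: "i \<le> ?n" using that by simp
    have "Suc (Suc ?n) - i = Suc (Suc ?n - i)" using i by simp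
    then show ?thesis using Mterm_low[OF i, of x a b]
      by (simp add: vs.scale_right_diff_distrib)
  qed
  have t1: "Mterm x (ys @ [a, b]) (Suc ?n) = prec (Mterm x (ys @ [a]) (Suc ?n)) b"
    by (simp add: Mterm_def omega_tsucc_def)
  have t2: "Mterm x (ys @ [a, b]) (Suc (Suc ?n)) = Mterm x (ys @ [prec a b]) (Suc ?n)"
    by (simp add: Mterm_def omegaP_prec[simplified])
  have S: "(\<Sum>i\<le>?n. sc ((-1) ^ (Suc (Suc ?n) - i)) (Mterm x (ys @ [a, b]) i)) =
     (\<Sum>i\<le>?n. sc ((-1) ^ (Suc ?n - i)) (Mterm x (ys @ [prec a b]) i))
     - (\<Sum>i\<le>?n. sc ((-1) ^ (Suc ?n - i)) (prec (Mterm x (ys @ [a]) i) b))"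
    by (simp only: sum.cong[OF refl low] sum_subtractf)
  have "M x (ys @ [a, b]) = (\<Sum>i\<le>?n. sc ((-1) ^ (Suc (Suc ?n) - i)) (Mterm x (ys @ [a, b]) i))
      + sc (-1) (Mterm x (ys @ [a, b]) (Suc ?n)) + Mterm x (ys @ [a, b]) (Suc (Suc ?n))"
    by (simp add: M_alt)
  also have "\<dots> = (\<Sum>i\<le>?n. sc ((-1) ^ (Suc ?n - i)) (Mterm x (ys @ [prec a b]) i))
     - (\<Sum>i\<le>?n. sc ((-1) ^ (Suc ?n - i)) (prec (Mterm x (ys @ [a]) i) b))
     - prec (Mterm x (ys @ [a]) (Suc ?n)) b + Mterm x (ys @ [prec a b]) (Suc ?n)"
    unfolding S t1 t2 by simp
  also have "\<dots> = M x (ys @ [prec a b]) - prec (M x (ys @ [a])) b"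
    by (simp add: M_alt prec_sum)
  finally show ?thesis .
qed



lemma sum_list_map_diff: "sum_list (map (\<lambda>p. f p - g p) xs) = sum_list (map f xs) - sum_list (map g xs)"
  for f g :: "'a \<Rightarrow> 'b::ab_group_add"
  by (induction xs) (auto simp: algebra_simps)

lemma Phi_gmap_alt: "Phi \<phi> (gmap f t) = sum_list (map (\<lambda>p. \<phi> (incl (fst (fst p))) (incl (f (fst (snd p))))) t)"
  by (simp add: gmap_def Phi_alt o_def)

lemma bf_minus:
  assumes "bilinear_form sc \<phi>"
  shows "\<phi> (a - b) w = \<phi> a w - \<phi> b w" "\<phi> w (a - b) = \<phi> w a - \<phi> w b"
proof -
  have e: "a - b = a + scaleA sc (-1) b" by (cases a, cases b) (simp add: scaleA_def)
  show "\<phi> (a - b) w = \<phi> a w - \<phi> b w" "\<phi> w (a - b) = \<phi> w a - \<phi> w b"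
    by (simp_all only: e bf_laws[OF assms] mult_minus1, simp_all)
qed

lemma prim_gmap_zero:
  assumes "primitive sc \<Delta> Q" "linF f" "bilinear_form sc \<phi>"
  shows "Phi \<phi> (gmap f (\<Delta> Q)) = 0"
proof -
  have "teq sc (gmap f (\<Delta> Q)) (gmap f (Pl Q))"
    by (rule gmap_resp[OF assms(2) assms(1)[unfolded primitive_def]])
  then have "Phi \<phi> (gmap f (\<Delta> Q)) = Phi \<phi> (gmap f (Pl Q))" using assms(3) unfolding teq_Phi by blast
  also have "\<dots> = 0" by (simp add: gmap_def linF_laws[OF assms(2)] bf_incl[OF assms(3)] bf_laws[OF assms(3)])
  finally show ?thesis .
qed

definition Good :: "'h \<Rightarrow> 'h list \<Rightarrow> bool" where
  "Good x ys \<longleftrightarrow> linF (\<lambda>Q. M x (ys @ [Q])) \<and>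
     (\<forall>Q \<phi>. bilinear_form sc \<phi> \<longrightarrow> Phi \<phi> (\<Delta> (M x (ys @ [Q]))) =
        \<phi> (incl (M x (ys @ [Q]))) unitA + \<phi> unitA (incl (M x (ys @ [Q])))
        + Phi \<phi> (gmap (\<lambda>Q. M x (ys @ [Q])) (\<Delta> Q)))"

lemma Good_prim:
  assumes "Good x ys" "primitive sc \<Delta> Q"
  shows "primitive sc \<Delta> (M x (ys @ [Q]))"
  unfolding primitive_def teq_Phi
proof (intro allI impI)
  fix \<phi> assume bf: "bilinear_form sc \<phi>"
  have l: "linF (\<lambda>Q. M x (ys @ [Q]))" using assms(1) unfolding Good_def by blast
  show "Phi \<phi> (\<Delta> (M x (ys @ [Q]))) = Phi \<phi> (Pl (M x (ys @ [Q])))"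
    using assms(1) bf prim_gmap_zero[OF assms(2) l bf] unfolding Good_def by simp
qed

lemma Good_base:
  assumes px: "primitive sc \<Delta> x"
  shows "Good x []"
proof -
  have f: "M x ([] @ [Q]) = sc q (dot Q x) + succ Q x - prec x Q" for Q
    by (simp add: M_single)
  have lin: "linF (\<lambda>Q. M x ([] @ [Q]))"
    unfolding f linF_def by (simp add: algebra_simps vs.scale_right_distrib)
  have "Phi \<phi> (\<Delta> (M x ([] @ [Q]))) =
        \<phi> (incl (M x ([] @ [Q]))) unitA + \<phi> unitA (incl (M x ([] @ [Q])))
        + Phi \<phi> (gmap (\<lambda>Q. M x ([] @ [Q])) (\<Delta> Q))" if bf: "bilinear_form sc \<phi>" for Q \<phi>
    unfolding f Phi_gmap_alt
    by (simp add: Phi_\<Delta>_lin[OF bf] D_prec_left[OF px bf] D_succ_right[OF px bf] D_dot_right[OF px bf]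
        bf_incl[OF bf] bf_laws[OF bf] bf_minus[OF bf] sum_list_map_add sum_list_map_diff sum_list_map_mult algebra_simps)
  then show ?thesis using lin unfolding Good_def by blast
qed

lemma Good_step:
  assumes G: "Good x ys" and pa: "primitive sc \<Delta> a"
  shows "Good x (ys @ [a])"
proof -
  define f where "f = (\<lambda>Q. M x (ys @ [Q]))"
  define C where "C = M x (ys @ [a])"
  have lf: "linF f" using G unfolding Good_def f_def by blast
  have pC: "primitive sc \<Delta> C" unfolding C_def by (rule Good_prim[OF G pa])
  have e: "M x ((ys @ [a]) @ [Q]) = f (prec a Q) - prec C Q" for Q
    unfolding f_def C_def by (simp add: M_rec)
  have lin: "linF (\<lambda>Q. M x ((ys @ [a]) @ [Q]))"
    unfolding e linF_def by (simp add: linF_laws[OF lf] algebra_simps vs.scale_right_distrib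
      vs.scale_right_diff_distrib)
  have fa: "f a = C" unfolding f_def C_def ..
  have "Phi \<phi> (\<Delta> (M x ((ys @ [a]) @ [Q]))) =
        \<phi> (incl (M x ((ys @ [a]) @ [Q]))) unitA + \<phi> unitA (incl (M x ((ys @ [a]) @ [Q])))
        + Phi \<phi> (gmap (\<lambda>Q. M x ((ys @ [a]) @ [Q])) (\<Delta> Q))" if bf: "bilinear_form sc \<phi>" for Q \<phi>
  proof -
    have IH: "Phi \<phi> (\<Delta> (f u)) = \<phi> (incl (f u)) unitA + \<phi> unitA (incl (f u)) + Phi \<phi> (gmap f (\<Delta> u))" for u
      using G bf unfolding Good_def f_def by blast
    show ?thesis
      unfolding e Phi_gmap_alt
      by (simp add: Phi_\<Delta>_lin[OF bf] IH D_gmap_prec[OF pa bf lf, unfolded fa] D_prec_left[OF pC bf]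
        bf_incl[OF bf] bf_laws[OF bf] bf_minus[OF bf] sum_list_map_add sum_list_map_diff sum_list_map_mult algebra_simps
        Phi_gmap_alt[symmetric])
  qed
  then show ?thesis using lin unfolding Good_def by blast
qed

lemma Good_all: "primitive sc \<Delta> x \<Longrightarrow> (\<forall>z\<in>set ys. primitive sc \<Delta> z) \<Longrightarrow> Good x ys"
proof (induction ys rule: rev_induct)
  case Nil
  then show ?case using Good_base by simp
next
  case (snoc a ys)
  then show ?case using Good_step by simp
qed

lemma M_prim:
  assumes "primitive sc \<Delta> x" "\<forall>z\<in>set zs. primitive sc \<Delta> z"
  shows "primitive sc \<Delta> (M x zs)"
proof (cases zs rule: rev_exhaust)
  case Nil
  then show ?thesis using assms(1) by (simp add: M_nil)
next
  case (snoc ys Q)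
  then show ?thesis using Good_prim[OF Good_all[OF assms(1)]] assms(2) by simp
qed

lemma dot_prim:
  assumes px: "primitive sc \<Delta> x" and py: "primitive sc \<Delta> y"
  shows "primitive sc \<Delta> (dot x y)"
  unfolding primitive_def teq_Phi
proof (intro allI impI)
  fix \<phi> assume bf: "bilinear_form sc \<phi>"
  have l: "linF (\<lambda>u. dot u y)" unfolding linF_def by simp
  have z: "Phi \<phi> (gmap (\<lambda>u. dot u y) (\<Delta> x)) = 0" by (rule prim_gmap_zero[OF px l bf])
  show "Phi \<phi> (\<Delta> (dot x y)) = Phi \<phi> (Pl (dot x y))"
    using z unfolding Phi_gmap_alt by (simp add: D_dot_right[OF py bf])
qed

lemma prim_subspace: "vs.subspace {x. primitive sc \<Delta> x}"
proof (rule vs.subspaceI)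
  have "Phi \<phi> (\<Delta> 0) = 0" if bf: "bilinear_form sc \<phi>" for \<phi>
  proof -
    have h: "Phi \<phi> (\<Delta> 0) = Phi \<phi> (\<Delta> 0) + Phi \<phi> (\<Delta> 0)"
      using Phi_\<Delta>_lin(1)[OF bf, of 0 0] by (simp only: add.left_neutral)
    then show ?thesis by (metis add_cancel_left_right)
  qed
  then show "0 \<in> {x. primitive sc \<Delta> x}"
    by (simp add: primitive_def teq_Phi bf_laws)
next
  fix x y assume "x \<in> {x. primitive sc \<Delta> x}" "y \<in> {x. primitive sc \<Delta> x}"
  then have px: "primitive sc \<Delta> x" and py: "primitive sc \<Delta> y" by auto
  show "x + y \<in> {x. primitive sc \<Delta> x}"
    unfolding mem_Collect_eq primitive_def teq_Phi
  proof (intro allI impI)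
    fix \<phi> assume bf: "bilinear_form sc \<phi>"
    show "Phi \<phi> (\<Delta> (x + y)) = Phi \<phi> (Pl (x + y))"
      using prim_Phi[OF px bf] prim_Phi[OF py bf]
      by (simp add: Phi_\<Delta>_lin[OF bf] bf_laws[OF bf])
  qed
next
  fix c x assume "x \<in> {x. primitive sc \<Delta> x}"
  then have px: "primitive sc \<Delta> x" by auto
  show "sc c x \<in> {x. primitive sc \<Delta> x}"
    unfolding mem_Collect_eq primitive_def teq_Phi
  proof (intro allI impI)
    fix \<phi> assume bf: "bilinear_form sc \<phi>"
    show "Phi \<phi> (\<Delta> (sc c x)) = Phi \<phi> (Pl (sc c x))"
      using prim_Phi[OF px bf]
      by (simp add: Phi_\<Delta>_lin[OF bf] bf_incl[OF bf] algebra_simps)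
  qed
qed

end

theorem lemma2p3:
  fixes sc :: "'k::field \<Rightarrow> 'h::ab_group_add \<Rightarrow> 'h"
    and q :: 'k
    and prec dot succ :: "'h \<Rightarrow> 'h \<Rightarrow> 'h"
    and \<Delta> :: "'h \<Rightarrow> ('h,'k) tens"
  assumes bialg: "q_tridendriform_bialgebra sc q prec dot succ \<Delta>"
  shows "(\<forall>x zs. primitive sc \<Delta> x \<and> (\<forall>z\<in>set zs. primitive sc \<Delta> z)
              \<longrightarrow> primitive sc \<Delta> (M1 sc q prec dot succ x zs))
       \<and> (\<forall>x y. primitive sc \<Delta> x \<and> primitive sc \<Delta> y \<longrightarrow> primitive sc \<Delta> (dot x y))
       \<and> module.subspace sc {x. primitive sc \<Delta> x}"
proof -
  interpret qtb sc q prec dot succ \<Delta> by (rule qtb.intro[OF bialg])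
  show ?thesis using M_prim dot_prim prim_subspace by blast
qed

end
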